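(* Let $n,d,t$ be integers with $3\le t\le d-2$ and $d\le n-3$, and let $a,b$ be positive integers with $a+b=n-d-1$. Let $H_{n,d,t;a,b}$ be the graph obtained from the disjoint union of a path $v_1v_2\dots v_{d+1}$, a complete graph $K_a$ and a complete graph $K_b$ by adding all edges between every vertex of $K_a$ and each of $v_{t-2},v_{t-1},v_t$, and all edges between every vertex of $K_b$ and each of $v_t,v_{t+1},v_{t+2}$. Then $\mu_{n-d}(H_{n,d,t;a,b})<n-d+2$.
   Context: For a graph $G$ of order $n$, $\mu_1(G)\ge\mu_2(G)\ge\dots\ge\mu_n(G)$ denote the eigenvalues of the Laplacian matrix $L(G)=D(G)-A(G)$. *)

theory Defs
  imports "Jordan_Normal_Form.Char_Poly" "HOL-Computational_Algebra.Polynomial_Factorial"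
begin

(* Simple graphs on vertex set {0..<n} given by a symmetric irreflexive adjacency predicate. *)

definition laplacian :: "nat \<Rightarrow> (nat \<Rightarrow> nat \<Rightarrow> bool) \<Rightarrow> real mat" where
  "laplacian n adj = mat n n (\<lambda>(i,j).
     if i = j then real (card {k. k < n \<and> adj i k})
     else if adj i j then -1 else 0)"

(* Eigenvalues of a real matrix with real spectrum, with multiplicity, in non-increasing order *)
definition eigs_desc :: "real mat \<Rightarrow> real list" where
  "eigs_desc M = rev (sorted_list_of_multiset (proots (char_poly M)))"

(* mu M k = k-th largest eigenvalue (1-indexed) *)
definition mu :: "real mat \<Rightarrow> nat \<Rightarrow> real" where
  "mu M k = eigs_desc M ! (k - 1)"

(* The graph H_{n,d,t;a,b}, n = d+1+a+b.
   Path vertex v_i (1 \<le> i \<le> d+1) is the number i-1; K_a occupies {d+1..d+a},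
   K_b occupies {d+a+1..d+a+b}. *)
definition H_adj :: "nat \<Rightarrow> nat \<Rightarrow> nat \<Rightarrow> nat \<Rightarrow> nat \<Rightarrow> nat \<Rightarrow> bool" where
  "H_adj d t a b i j \<longleftrightarrow> i \<noteq> j \<and> (
     let inP = (\<lambda>x. x \<le> d);
         inA = (\<lambda>x. d + 1 \<le> x \<and> x \<le> d + a);
         inB = (\<lambda>x. d + a + 1 \<le> x \<and> x \<le> d + a + b);
         nbA = {t - 3, t - 2, t - 1};
         nbB = {t - 1, t, t + 1}
     in (inP i \<and> inP j \<and> (i = j + 1 \<or> j = i + 1))
      \<or> (inA i \<and> inA j) \<or> (inB i \<and> inB j)
      \<or> (inA i \<and> j \<in> nbA) \<or> (inA j \<and> i \<in> nbA)
      \<or> (inB i \<and> j \<in> nbB) \<or> (inB j \<and> i \<in> nbB))"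

end

theory Submission
  imports Defs "Jordan_Normal_Form.Schur_Decomposition"
begin

lemma sym_scalar:
  fixes A :: "real mat"
  assumes A: "A \<in> carrier_mat n n" and sym: "transpose_mat A = A"
    and u: "u \<in> carrier_vec n" and w: "w \<in> carrier_vec n"
  shows "(A *\<^sub>v u) \<bullet> w = u \<bullet> (A *\<^sub>v w)"
  using transpose_vec_mult_scalar[OF A w u] sym by simp

lemma self_pos:
  fixes u :: "real vec"
  assumes "u \<in> carrier_vec n" "u \<noteq> 0\<^sub>v n"
  shows "u \<bullet> u > 0"
  using conjugate_square_greater_0_vec[OF assms(1)] assms by simp

lemma orth_eig_contra:
  fixes A :: "real mat"
  assumes A: "A \<in> carrier_mat n n" and sym: "transpose_mat A = A"
  and u: "u \<in> carrier_vec n" and w: "w \<in> carrier_vec n"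
  and u0: "u \<noteq> 0\<^sub>v n" and w0: "w \<noteq> 0\<^sub>v n"
  and eu: "A *\<^sub>v u = e1 \<cdot>\<^sub>v u" and ew: "A *\<^sub>v w = e2 \<cdot>\<^sub>v w"
  and orth: "u \<bullet> w = 0"
  and x1: "x \<le> e1" and x2: "x \<le> e2" and c: "c < n"
  shows "\<exists>v \<in> carrier_vec n. v \<noteq> 0\<^sub>v n \<and> v $ c = 0 \<and> x * (v \<bullet> v) \<le> v \<bullet> (A *\<^sub>v v)"
proof (cases "u $ c = 0")
  case True
  have "u \<bullet> (A *\<^sub>v u) = e1 * (u \<bullet> u)" using eu u by simp
  moreover have "u \<bullet> u \<ge> 0" using self_pos[OF u u0] by simp
  ultimately have "x * (u \<bullet> u) \<le> u \<bullet> (A *\<^sub>v u)" using x1 by (simp add: mult_right_mono)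
  then show ?thesis using u u0 True by blast
next
  case False
  define \<alpha> where "\<alpha> = w $ c"
  define \<gamma> where "\<gamma> = - (u $ c)"
  define v where "v = \<alpha> \<cdot>\<^sub>v u + \<gamma> \<cdot>\<^sub>v w"
  have v: "v \<in> carrier_vec n" unfolding v_def using u w by simp
  have wu: "w \<bullet> u = 0" using orth comm_scalar_prod[OF u w] by simp
  have vc: "v $ c = 0" unfolding v_def \<alpha>_def \<gamma>_def using u w c by simp
  have uu: "u \<bullet> u > 0" "w \<bullet> w > 0" using self_pos u w u0 w0 by auto
  have vv: "v \<bullet> v = \<alpha>^2 * (u \<bullet> u) + \<gamma>^2 * (w \<bullet> w)"
    unfolding v_def using u w orth wu
    by (simp add: add_scalar_prod_distrib[of _ n] scalar_prod_add_distrib[of _ n] power2_eq_square)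
  have Av: "A *\<^sub>v v = (\<alpha> * e1) \<cdot>\<^sub>v u + (\<gamma> * e2) \<cdot>\<^sub>v w"
    unfolding v_def using u w A eu ew
    by (simp add: mult_add_distrib_mat_vec[of _ n n] mult_mat_vec[of _ n n] smult_smult_assoc)
  have vAv: "v \<bullet> (A *\<^sub>v v) = \<alpha>^2 * e1 * (u \<bullet> u) + \<gamma>^2 * e2 * (w \<bullet> w)"
    unfolding Av unfolding v_def using u w orth wu
    by (simp add: add_scalar_prod_distrib[of _ n] scalar_prod_add_distrib[of _ n] power2_eq_square)
  have "v \<noteq> 0\<^sub>v n"
  proof
    assume "v = 0\<^sub>v n"
    then have "v \<bullet> v = 0" by simp
    with vv uu have "\<gamma>^2 * (w \<bullet> w) = 0"
      by (smt (verit) mult_nonneg_nonneg zero_le_power2)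
    then have "\<gamma> = 0" using uu by simp
    then show False using False \<gamma>_def by simp
  qed
  moreover have "x * (v \<bullet> v) \<le> v \<bullet> (A *\<^sub>v v)"
  proof -
    have "x * (\<alpha>^2 * (u \<bullet> u)) \<le> \<alpha>^2 * e1 * (u \<bullet> u)"
      using x1 uu by (simp add: mult_right_mono mult.commute mult.left_commute)
    moreover have "x * (\<gamma>^2 * (w \<bullet> w)) \<le> \<gamma>^2 * e2 * (w \<bullet> w)"
      using x2 uu by (simp add: mult_right_mono mult.commute mult.left_commute)
    ultimately show ?thesis unfolding vv vAv by (simp add: distrib_left)
  qed
  ultimately show ?thesis using v vc by blast
qed

lemma schur_two:
  fixes A :: "real mat"
  assumes A: "A \<in> carrier_mat n n"
    and cp: "char_poly A = (\<Prod>e\<leftarrow>(e1 # e2 # rest). [:-e,1:])"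
  shows "\<exists>p0 p1 \<beta>. p0 \<in> carrier_vec n \<and> p1 \<in> carrier_vec n \<and> p0 \<noteq> 0\<^sub>v n \<and> (\<forall>k. p1 \<noteq> k \<cdot>\<^sub>v p0)
     \<and> A *\<^sub>v p0 = e1 \<cdot>\<^sub>v p0 \<and> A *\<^sub>v p1 = \<beta> \<cdot>\<^sub>v p0 + e2 \<cdot>\<^sub>v p1"
proof -
  obtain B P Q where sd: "schur_decomposition A (e1#e2#rest) = (B,P,Q)"
    by (cases "schur_decomposition A (e1#e2#rest)") auto
  from schur_decomposition[OF A cp sd] have sim: "similar_mat_wit A B P Q"
    and ut: "upper_triangular B" and dg: "diag_mat B = e1#e2#rest" by auto
  from sim A have B: "B \<in> carrier_mat n n" and P: "P \<in> carrier_mat n n" and Q: "Q \<in> carrier_mat n n"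
    and QP: "Q * P = 1\<^sub>m n" and AE: "A = P * B * Q"
    unfolding similar_mat_wit_def Let_def by auto
  have len: "length (diag_mat B) = n" using B unfolding diag_mat_def by simp
  then have n2: "2 \<le> n" using dg by simp
  have dgi: "diag_mat B ! i = B $$ (i,i)" if "i < n" for i
    unfolding diag_mat_def using that B by simp
  have B00: "B $$ (0,0) = e1" using dgi[of 0] dg n2 by simp
  have B11: "B $$ (1,1) = e2" using dgi[of 1] dg n2 by simp
  have Bl: "B $$ (i,j) = 0" if "j < i" "i < n" for i j
    using ut that B unfolding upper_triangular_def by auto
  have AP: "A * P = P * B"
  proof -
    have "A * P = P * B * (Q * P)" unfolding AE using P B Q
      by (metis assoc_mult_mat mult_carrier_mat)
    also have "\<dots> = P * B" unfolding QP using P B by simp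
    finally show ?thesis .
  qed
  have colAP: "A *\<^sub>v col P j = P *\<^sub>v col B j" if "j < n" for j
  proof -
    have "A *\<^sub>v col P j = col (A * P) j" using A P that by (intro col_mult2[symmetric]) auto
    also have "\<dots> = col (P * B) j" unfolding AP ..
    also have "\<dots> = P *\<^sub>v col B j" using P B that by (intro col_mult2) auto
    finally show ?thesis .
  qed
  have colP: "col P j = P *\<^sub>v col (1\<^sub>m n) j" if "j < n" for j
  proof -
    have "col P j = col (P * 1\<^sub>m n) j" using P by simp
    also have "\<dots> = P *\<^sub>v col (1\<^sub>m n) j" using P that by (intro col_mult2) auto
    finally show ?thesis .
  qed
  define p0 where "p0 = col P 0"
  define p1 where "p1 = col P 1"
  define \<beta> where "\<beta> = B $$ (0,1)"
  have p0: "p0 \<in> carrier_vec n" and p1: "p1 \<in> carrier_vec n" unfolding p0_def p1_def using P by auto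
  have cB0: "col B 0 = e1 \<cdot>\<^sub>v col (1\<^sub>m n) 0"
  proof (rule eq_vecI)
    fix i assume i: "i < dim_vec (e1 \<cdot>\<^sub>v col (1\<^sub>m n) 0)"
    then have i: "i < n" by simp
    show "col B 0 $ i = (e1 \<cdot>\<^sub>v col (1\<^sub>m n) 0) $ i"
      using i B n2 B00 Bl[of 0 i] by (cases "i = 0") auto
  qed (use B in simp)
  have cB1: "col B 1 = \<beta> \<cdot>\<^sub>v col (1\<^sub>m n) 0 + e2 \<cdot>\<^sub>v col (1\<^sub>m n) 1"
  proof (rule eq_vecI)
    fix i assume i: "i < dim_vec (\<beta> \<cdot>\<^sub>v col (1\<^sub>m n) 0 + e2 \<cdot>\<^sub>v col (1\<^sub>m n) 1)"
    then have i: "i < n" by simp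
    show "col B 1 $ i = (\<beta> \<cdot>\<^sub>v col (1\<^sub>m n) 0 + e2 \<cdot>\<^sub>v col (1\<^sub>m n) 1) $ i"
      using i B n2 B11 Bl[of 1 i] by (cases "i = 0"; cases "i = 1") (auto simp: \<beta>_def)
  qed (use B in simp)
  have n0: "0 < n" and n1: "1 < n" using n2 by auto
  have cP0: "col P 0 = P *\<^sub>v col (1\<^sub>m n) 0" using colP[OF n0] .
  have cP1: "col P 1 = P *\<^sub>v col (1\<^sub>m n) 1" using colP[OF n1] .
  have e0: "A *\<^sub>v p0 = e1 \<cdot>\<^sub>v p0"
  proof -
    have "A *\<^sub>v p0 = P *\<^sub>v col B 0" unfolding p0_def using colAP[OF n0] .
    also have "\<dots> = P *\<^sub>v (e1 \<cdot>\<^sub>v col (1\<^sub>m n) 0)" unfolding cB0 ..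
    also have "\<dots> = e1 \<cdot>\<^sub>v (P *\<^sub>v col (1\<^sub>m n) 0)" using P n0 by (intro mult_mat_vec) auto
    also have "\<dots> = e1 \<cdot>\<^sub>v p0" unfolding p0_def cP0 ..
    finally show ?thesis .
  qed
  have e1: "A *\<^sub>v p1 = \<beta> \<cdot>\<^sub>v p0 + e2 \<cdot>\<^sub>v p1"
  proof -
    have "A *\<^sub>v p1 = P *\<^sub>v col B 1" unfolding p1_def using colAP[OF n1] .
    also have "\<dots> = P *\<^sub>v (\<beta> \<cdot>\<^sub>v col (1\<^sub>m n) 0 + e2 \<cdot>\<^sub>v col (1\<^sub>m n) 1)" unfolding cB1 ..
    also have "\<dots> = P *\<^sub>v (\<beta> \<cdot>\<^sub>v col (1\<^sub>m n) 0) + P *\<^sub>v (e2 \<cdot>\<^sub>v col (1\<^sub>m n) 1)"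
      using P n0 n1 by (intro mult_add_distrib_mat_vec) auto
    also have "\<dots> = \<beta> \<cdot>\<^sub>v (P *\<^sub>v col (1\<^sub>m n) 0) + e2 \<cdot>\<^sub>v (P *\<^sub>v col (1\<^sub>m n) 1)"
      using P n0 n1 by (simp add: mult_mat_vec[of _ n n])
    also have "\<dots> = \<beta> \<cdot>\<^sub>v p0 + e2 \<cdot>\<^sub>v p1" unfolding p0_def p1_def cP0 cP1 ..
    finally show ?thesis .
  qed
  have QPv: "Q *\<^sub>v (P *\<^sub>v z) = z" if "z \<in> carrier_vec n" for z
    using that P Q QP by (metis assoc_mult_mat_vec one_mult_mat_vec)
  have "p0 \<noteq> 0\<^sub>v n"
  proof
    assume "p0 = 0\<^sub>v n"
    then have "P *\<^sub>v col (1\<^sub>m n) 0 = 0\<^sub>v n" unfolding p0_def cP0 .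
    then have "Q *\<^sub>v (P *\<^sub>v col (1\<^sub>m n) 0) = 0\<^sub>v n" using Q by auto
    moreover have "Q *\<^sub>v (P *\<^sub>v col (1\<^sub>m n) 0) = col (1\<^sub>m n) 0" using QPv[of "col (1\<^sub>m n) 0"] n0 by simp
    ultimately have "col (1\<^sub>m n) 0 $ 0 = (0\<^sub>v n :: real vec) $ 0" by simp
    then show False using n0 by simp
  qed
  moreover have "p1 \<noteq> k \<cdot>\<^sub>v p0" for k
  proof
    assume h: "p1 = k \<cdot>\<^sub>v p0"
    define z :: "real vec" where "z = col (1\<^sub>m n) 1 - k \<cdot>\<^sub>v col (1\<^sub>m n) 0"
    have z: "z \<in> carrier_vec n" unfolding z_def using n0 n1 by simp
    have "P *\<^sub>v z = p1 - k \<cdot>\<^sub>v p0" unfolding z_def p1_def p0_def using P n2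
      by (simp add: mult_minus_distrib_mat_vec[of _ n n] mult_mat_vec[of _ n n] colP)
    also have "\<dots> = 0\<^sub>v n" unfolding h using p0 by simp
    finally have "Q *\<^sub>v (P *\<^sub>v z) = 0\<^sub>v n" using Q by auto
    then have "z = 0\<^sub>v n" using QPv[OF z] by simp
    then have "z $ 1 = 0" using n1 by simp
    then show False unfolding z_def using n0 n1 by simp
  qed
  ultimately show ?thesis using p0 p1 e0 e1 by blast
qed

lemma two_roots_contra:
  fixes A :: "real mat"
  assumes A: "A \<in> carrier_mat n n" and sym: "transpose_mat A = A"
    and cp: "char_poly A = (\<Prod>e\<leftarrow>(e1 # e2 # rest). [:-e,1:])"
    and x1: "x \<le> e1" and x2: "x \<le> e2" and c: "c < n"
    and H: "\<And>v. v \<in> carrier_vec n \<Longrightarrow> v \<noteq> 0\<^sub>v n \<Longrightarrow> v $ c = 0 \<Longrightarrow> v \<bullet> (A *\<^sub>v v) < x * (v \<bullet> v)"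
  shows False
proof -
  obtain p0 p1 \<beta> where p0: "p0 \<in> carrier_vec n" and p1: "p1 \<in> carrier_vec n" and p00: "p0 \<noteq> 0\<^sub>v n"
    and ind: "\<And>k. p1 \<noteq> k \<cdot>\<^sub>v p0" and e0: "A *\<^sub>v p0 = e1 \<cdot>\<^sub>v p0"
    and e1: "A *\<^sub>v p1 = \<beta> \<cdot>\<^sub>v p0 + e2 \<cdot>\<^sub>v p1"
    using schur_two[OF A cp] by blast
  have pp: "p0 \<bullet> p0 > 0" using self_pos[OF p0 p00] .
  define k where "k = (p0 \<bullet> p1) / (p0 \<bullet> p0)"
  define w where "w = p1 - k \<cdot>\<^sub>v p0"
  have w: "w \<in> carrier_vec n" unfolding w_def using p0 p1 by simp
  have "p0 \<bullet> (A *\<^sub>v p1) = (A *\<^sub>v p0) \<bullet> p1" using sym_scalar[OF A sym p0 p1] by simp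
  then have "\<beta> * (p0 \<bullet> p0) + e2 * (p0 \<bullet> p1) = e1 * (p0 \<bullet> p1)"
    unfolding e0 e1 using p0 p1 by (simp add: scalar_prod_add_distrib[of _ n])
  then have beta: "\<beta> = k * (e1 - e2)" unfolding k_def using pp
    by (simp add: field_simps)
  have w0: "w \<noteq> 0\<^sub>v n"
  proof
    assume h: "w = 0\<^sub>v n"
    have "p1 = k \<cdot>\<^sub>v p0"
    proof (rule eq_vecI)
      fix i assume "i < dim_vec (k \<cdot>\<^sub>v p0)"
      then have i: "i < n" using p0 by simp
      have "w $ i = 0" using h i by simp
      then show "p1 $ i = (k \<cdot>\<^sub>v p0) $ i" unfolding w_def using i p0 p1 by simp
    qed (use p0 p1 in simp)
    then show False using ind by blast
  qed
  have ew: "A *\<^sub>v w = e2 \<cdot>\<^sub>v w"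
  proof -
    have "A *\<^sub>v w = A *\<^sub>v p1 - k \<cdot>\<^sub>v (A *\<^sub>v p0)" unfolding w_def using A p0 p1
      by (simp add: mult_minus_distrib_mat_vec[of _ n n] mult_mat_vec[of _ n n])
    also have "\<dots> = e2 \<cdot>\<^sub>v w" unfolding e0 e1 w_def beta
      by (intro eq_vecI) (use p0 p1 in \<open>auto simp: algebra_simps\<close>)
    finally show ?thesis .
  qed
  have orth: "p0 \<bullet> w = 0" unfolding w_def using p0 p1 pp
    by (simp add: scalar_prod_minus_distrib[of _ n] k_def)
  obtain v where v: "v \<in> carrier_vec n" "v \<noteq> 0\<^sub>v n" "v $ c = 0" "x * (v \<bullet> v) \<le> v \<bullet> (A *\<^sub>v v)"
    using orth_eig_contra[OF A sym p0 w p00 w0 e0 ew orth x1 x2 c] by blast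
  from H[OF v(1-3)] v(4) show False by simp
qed

lemma herm_real_eig:
  fixes A :: "real mat" and z :: complex
  assumes A: "A \<in> carrier_mat n n" and sym: "\<And>i j. i < n \<Longrightarrow> j < n \<Longrightarrow> A $$ (i,j) = A $$ (j,i)"
    and u: "u \<in> carrier_vec n" and u0: "u \<noteq> 0\<^sub>v n"
    and ev: "map_mat complex_of_real A *\<^sub>v u = z \<cdot>\<^sub>v u"
  shows "Im z = 0"
proof -
  let ?Ac = "map_mat complex_of_real A"
  have row: "(?Ac *\<^sub>v u) $ i = (\<Sum>j<n. complex_of_real (A $$ (i,j)) * u $ j)" if "i < n" for i
    using that A u by (simp add: scalar_prod_def lessThan_atLeast0)
  define S where "S = (\<Sum>i<n. \<Sum>j<n. complex_of_real (A $$ (i,j)) * (cnj (u $ i) * u $ j))"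
  define N where "N = (\<Sum>i<n. cnj (u $ i) * u $ i)"
  have "S = (\<Sum>i<n. cnj (u $ i) * (?Ac *\<^sub>v u) $ i)"
    unfolding S_def by (simp add: row sum_distrib_left mult.commute mult.left_commute)
  also have "\<dots> = (\<Sum>i<n. cnj (u $ i) * (z * u $ i))"
    using ev u by (intro sum.cong) auto
  also have "\<dots> = z * N" unfolding N_def by (simp add: sum_distrib_left mult.commute mult.left_commute)
  finally have SzN: "S = z * N" .
  have "cnj S = (\<Sum>i<n. \<Sum>j<n. complex_of_real (A $$ (i,j)) * (u $ i * cnj (u $ j)))"
    unfolding S_def by (simp add: cnj_sum)
  also have "\<dots> = (\<Sum>j<n. \<Sum>i<n. complex_of_real (A $$ (i,j)) * (u $ i * cnj (u $ j)))"
    by (rule sum.swap)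
  also have "\<dots> = S" unfolding S_def
    by (intro sum.cong refl) (simp add: sym mult.commute)
  finally have cS: "cnj S = S" .
  have Nre: "N = complex_of_real (\<Sum>i<n. (cmod (u $ i))^2)"
  proof -
    have "cnj (u $ i) * u $ i = complex_of_real ((cmod (u $ i))^2)" for i
      using complex_norm_square[of "u $ i"] by (simp add: mult.commute)
    then show ?thesis unfolding N_def by (simp add: of_real_sum)
  qed
  have "\<exists>i<n. u $ i \<noteq> 0"
  proof (rule ccontr)
    assume "\<not> ?thesis"
    then have "u = 0\<^sub>v n" using u by (intro eq_vecI) auto
    then show False using u0 by simp
  qed
  then obtain i where i: "i < n" "u $ i \<noteq> 0" by blast
  have "(\<Sum>i<n. (cmod (u $ i))^2) > 0"
  proof -
    have "(cmod (u $ i))^2 \<le> (\<Sum>i<n. (cmod (u $ i))^2)"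
      by (rule member_le_sum) (use i in auto)
    moreover have "(cmod (u $ i))^2 > 0" using i by simp
    ultimately show ?thesis by linarith
  qed
  then obtain r where r: "N = complex_of_real r" "r > 0" using Nre by blast
  then have N0: "N \<noteq> 0" "Im N = 0" by auto
  have "Im S = 0" using cS by (metis Reals_cnj_iff complex_is_Real_iff)
  then have "Im (z * N) = 0" using SzN by simp
  then have "Im z * Re N = 0" using N0(2) by simp
  moreover have "Re N \<noteq> 0" using N0 by (simp add: complex_eq_iff)
  ultimately show "Im z = 0" by simp
qed


lemma real_factorization:
  fixes A :: "real mat"
  assumes A: "A \<in> carrier_mat n n" and sym: "\<And>i j. i < n \<Longrightarrow> j < n \<Longrightarrow> A $$ (i,j) = A $$ (j,i)"
  shows "\<exists>es. char_poly A = (\<Prod>e\<leftarrow>es. [:-e,1:]) \<and> length es = n"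
proof -
  interpret R: map_poly_inj_idom_hom complex_of_real ..
  let ?Ac = "map_mat complex_of_real A"
  have Ac: "?Ac \<in> carrier_mat n n" using A by simp
  obtain zs where zs: "char_poly ?Ac = (\<Prod>z\<leftarrow>zs. [:-z,1:])" "length zs = n"
    using char_poly_factorized[OF Ac] by blast
  have cpAc: "char_poly ?Ac = map_poly complex_of_real (char_poly A)"
    using of_real_hom.char_poly_hom[OF A] by simp
  have real: "Im z = 0" if z: "z \<in> set zs" for z
  proof -
    have "poly (char_poly ?Ac) z = 0" unfolding zs(1) using z by (rule linear_poly_root)
    then have "eigenvalue ?Ac z" using eigenvalue_root_char_poly[OF Ac] by simp
    then obtain u where "eigenvector ?Ac u z" unfolding eigenvalue_def by blast
    then have u: "u \<in> carrier_vec n" "u \<noteq> 0\<^sub>v n" "?Ac *\<^sub>v u = z \<cdot>\<^sub>v u"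
      unfolding eigenvector_def using A by auto
    show ?thesis by (rule herm_real_eig[OF A sym u])
  qed
  define es where "es = map Re zs"
  have "map_poly complex_of_real (\<Prod>e\<leftarrow>es. [:-e,1:]) = (\<Prod>z\<leftarrow>zs. [:-z,1:])"
    unfolding es_def R.hom_prod_list map_map o_def
  proof (intro arg_cong[of _ _ prod_list] map_cong refl)
    fix z assume "z \<in> set zs"
    then have "complex_of_real (Re z) = z" using real by (simp add: complex_eq_iff)
    then show "map_poly complex_of_real [:- Re z, 1:] = [:- z, 1:]" by simp
  qed
  then have "map_poly complex_of_real (char_poly A) = map_poly complex_of_real (\<Prod>e\<leftarrow>es. [:-e,1:])"
    using cpAc zs(1) by simp
  then have "char_poly A = (\<Prod>e\<leftarrow>es. [:-e,1:])" by (rule R.injectivity)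
  moreover have "length es = n" using zs(2) es_def by simp
  ultimately show ?thesis by blast
qed


lemma proots_linear_prod:
  fixes es :: "real list"
  shows "proots (\<Prod>e\<leftarrow>es. [:-e,1:]) = mset es"
proof (induction es)
  case Nil then show ?case by simp
next
  case (Cons e es)
  have nz: "(\<Prod>e\<leftarrow>es. [:-e,1:]) \<noteq> (0 :: real poly)"
    by (auto simp: prod_list_zero_iff)
  have "proots ([:-e,1:] * (\<Prod>e\<leftarrow>es. [:-e,1:])) = proots [:-e,1:] + proots (\<Prod>e\<leftarrow>es. [:-e,1:])"
    by (rule proots_mult) (use nz in auto)
  then have "proots (\<Prod>e\<leftarrow>(e#es). [:-e,1:]) = proots [:-e,1:] + proots (\<Prod>e\<leftarrow>es. [:-e,1:])"
    by (simp only: list.map prod_list.Cons)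
  also have "proots [:-e,1:] = {#e#}" using proots_linear_factor[of "-e"] by simp
  finally show ?case using Cons by simp
qed

lemma prod_list_perm:
  fixes f :: "'a \<Rightarrow> 'b :: comm_monoid_mult"
  assumes "mset xs = mset ys"
  shows "(\<Prod>x\<leftarrow>xs. f x) = (\<Prod>x\<leftarrow>ys. f x)"
proof -
  have "(\<Prod>x\<leftarrow>xs. f x) = prod_mset (mset (map f xs))" by (simp only: prod_mset_prod_list)
  also have "\<dots> = prod_mset (mset (map f ys))" using assms by simp
  also have "\<dots> = (\<Prod>x\<leftarrow>ys. f x)" by (simp only: prod_mset_prod_list)
  finally show ?thesis .
qed

lemma spectral_count:
  fixes A :: "real mat"
  assumes A: "A \<in> carrier_mat n n" and sym: "\<And>i j. i < n \<Longrightarrow> j < n \<Longrightarrow> A $$ (i,j) = A $$ (j,i)"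
    and c: "c < n"
    and H: "\<And>v. v \<in> carrier_vec n \<Longrightarrow> v \<noteq> 0\<^sub>v n \<Longrightarrow> v $ c = 0 \<Longrightarrow> v \<bullet> (A *\<^sub>v v) < x * (v \<bullet> v)"
    and k: "1 \<le> k" "k < n"
  shows "eigs_desc A ! k < x"
proof (rule ccontr)
  assume ge: "\<not> eigs_desc A ! k < x"
  obtain es where es: "char_poly A = (\<Prod>e\<leftarrow>es. [:-e,1:])" "length es = n"
    using real_factorization[OF A sym] by blast
  define s where "s = sort es"
  have ed: "eigs_desc A = rev s" unfolding eigs_desc_def s_def es(1) proots_linear_prod
    by (simp add: sorted_list_of_multiset_mset)
  have ls: "length s = n" unfolding s_def using es(2) by simp
  have ss: "sorted s" unfolding s_def by simp
  have "rev s ! k = s ! (n - 1 - k)" using k ls by (simp add: rev_nth)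
  then have xk: "x \<le> s ! (n - 1 - k)" using ge ed by simp
  have i1: "n - 1 - k \<le> n - 2" "n - 2 < length s" "n - 1 - k \<le> n - 1" "n - 1 < length s" using k ls by auto
  have x1: "x \<le> s ! (n - 2)" using xk sorted_nth_mono[OF ss i1(1,2)] by linarith
  have x2: "x \<le> s ! (n - 1)" using xk sorted_nth_mono[OF ss i1(3,4)] by linarith
  define rest where "rest = take (n - 2) s"
  have dr: "drop (n - 2) s = [s ! (n - 2), s ! (n - 1)]"
  proof (rule nth_equalityI)
    show "length (drop (n - 2) s) = length [s ! (n - 2), s ! (n - 1)]" using k ls by simp
    fix i assume "i < length (drop (n - 2) s)"
    then have "i = 0 \<or> i = 1" using k ls by auto
    then show "drop (n - 2) s ! i = [s ! (n - 2), s ! (n - 1)] ! i"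
    proof
      assume "i = 0" then show ?thesis using k ls by simp
    next
      assume "i = 1"
      moreover have "n - 2 + 1 = n - 1" using k by simp
      ultimately show ?thesis using k ls by simp
    qed
  qed
  have "mset (s ! (n - 2) # s ! (n - 1) # rest) = mset s"
  proof -
    have "mset s = mset (take (n - 2) s @ drop (n - 2) s)" by simp
    also have "\<dots> = mset (s ! (n - 2) # s ! (n - 1) # rest)" unfolding dr rest_def by simp
    finally show ?thesis by simp
  qed
  also have "mset s = mset es" unfolding s_def by simp
  finally have "char_poly A = (\<Prod>e\<leftarrow>(s ! (n - 2) # s ! (n - 1) # rest). [:-e,1:])"
    unfolding es(1) by (intro prod_list_perm) simp
  moreover have "transpose_mat A = A" using A sym by (intro eq_matI) auto
  ultimately show False using two_roots_contra[OF A _ _ x1 x2 c H] by blast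
qed

lemma laplacian_carrier: "laplacian n adj \<in> carrier_mat n n"
  unfolding laplacian_def by simp

lemma laplacian_index: "i < n \<Longrightarrow> j < n \<Longrightarrow> laplacian n adj $$ (i,j) =
   (if i = j then real (card {k. k < n \<and> adj i k}) else if adj i j then -1 else 0)"
  unfolding laplacian_def by simp

lemma laplacian_row:
  assumes irr: "\<And>i. \<not> adj i i" and v: "v \<in> carrier_vec n" and i: "i < n"
  shows "(laplacian n adj *\<^sub>v v) $ i = (\<Sum>j\<in>{j. j < n \<and> adj i j}. v $ i - v $ j)"
proof -
  let ?N = "{j. j < n \<and> adj i j}"
  have fin: "finite ?N" by simp
  have "(laplacian n adj *\<^sub>v v) $ i = (\<Sum>j\<in>{0..<n}. laplacian n adj $$ (i,j) * v $ j)"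
    using v i laplacian_carrier[of n adj] by (simp add: scalar_prod_def)
  also have "\<dots> = laplacian n adj $$ (i,i) * v $ i + (\<Sum>j\<in>{0..<n} - {i}. laplacian n adj $$ (i,j) * v $ j)"
    using i by (subst sum.remove[of _ i]) auto
  also have "(\<Sum>j\<in>{0..<n} - {i}. laplacian n adj $$ (i,j) * v $ j) = (\<Sum>j\<in>{0..<n} - {i}. if adj i j then - v $ j else 0)"
    using i by (intro sum.cong) (auto simp: laplacian_index)
  also have "\<dots> = (\<Sum>j\<in>?N. - v $ j)"
  proof -
    have "(\<Sum>j\<in>{0..<n} - {i}. if adj i j then - v $ j else 0) = (\<Sum>j\<in>{j \<in> {0..<n} - {i}. adj i j}. - v $ j)"
      by (rule sum.inter_filter[symmetric]) simp
    also have "{j \<in> {0..<n} - {i}. adj i j} = ?N" using irr by auto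
    finally show ?thesis .
  qed
  also have "laplacian n adj $$ (i,i) = real (card ?N)" using i by (simp add: laplacian_index)
  finally have "(laplacian n adj *\<^sub>v v) $ i = real (card ?N) * v $ i + (\<Sum>j\<in>?N. - v $ j)" .
  also have "\<dots> = (\<Sum>j\<in>?N. v $ i - v $ j)"
    by (simp add: sum_subtractf sum_negf)
  finally show ?thesis .
qed

lemma laplacian_quad:
  assumes irr: "\<And>i. \<not> adj i i" and v: "v \<in> carrier_vec n"
  shows "v \<bullet> (laplacian n adj *\<^sub>v v) = (\<Sum>i<n. v $ i * (\<Sum>j\<in>{j. j < n \<and> adj i j}. v $ i - v $ j))"
proof -
  have "v \<bullet> (laplacian n adj *\<^sub>v v) = (\<Sum>i\<in>{0..<n}. v $ i * (laplacian n adj *\<^sub>v v) $ i)"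
    using laplacian_carrier[of n adj] unfolding scalar_prod_def by simp
  also have "\<dots> = (\<Sum>i<n. v $ i * (\<Sum>j\<in>{j. j < n \<and> adj i j}. v $ i - v $ j))"
    unfolding lessThan_atLeast0 by (intro sum.cong refl) (simp add: laplacian_row[OF irr v])
  finally show ?thesis .
qed

lemma sq_bound:
  fixes p q :: real
  shows "(p - q)^2 \<le> 5/2 * p^2 + 5/3 * q^2"
proof -
  have h: "0 \<le> (3*p + 2*q)^2" by simp
  have e1: "(3*p + 2*q)^2 = 9*(p*p) + 12*(p*q) + 4*(q*q)" by (simp add: power2_eq_square algebra_simps)
  have e2: "(p - q)^2 = p*p - 2*(p*q) + q*q" by (simp add: power2_eq_square algebra_simps)
  have e3: "p^2 = p*p" "q^2 = q*q" by (simp_all add: power2_eq_square)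
  show ?thesis using h unfolding e1 e2 e3 by linarith
qed

lemma path_sum:
  fixes w :: "nat \<Rightarrow> real"
  shows "(\<Sum>i\<le>D. w i * ((if 0 < i then w i - w (i - 1) else 0) + (if i < D then w i - w (i + 1) else 0)))
       = (\<Sum>i<D. (w i - w (i + 1))^2)"
proof -
  have s1: "(\<Sum>i\<le>D. w i * (if i < D then w i - w (i + 1) else 0)) = (\<Sum>i<D. w i * (w i - w (i + 1)))"
  proof -
    have "(\<Sum>i\<le>D. w i * (if i < D then w i - w (i + 1) else 0)) = (\<Sum>i<D. w i * (if i < D then w i - w (i + 1) else 0))"
      unfolding lessThan_Suc_atMost[symmetric] by (simp add: sum.lessThan_Suc)
    also have "\<dots> = (\<Sum>i<D. w i * (w i - w (i + 1)))" by (intro sum.cong) auto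
    finally show ?thesis .
  qed
  have s2: "(\<Sum>i\<le>D. w i * (if 0 < i then w i - w (i - 1) else 0)) = (\<Sum>i<D. w (i+1) * (w (i+1) - w i))"
    unfolding lessThan_Suc_atMost[symmetric] sum.lessThan_Suc_shift by simp
  have "(\<Sum>i\<le>D. w i * ((if 0 < i then w i - w (i - 1) else 0) + (if i < D then w i - w (i + 1) else 0)))
     = (\<Sum>i\<le>D. w i * (if 0 < i then w i - w (i - 1) else 0)) + (\<Sum>i\<le>D. w i * (if i < D then w i - w (i + 1) else 0))"
    by (simp add: distrib_left sum.distrib)
  also have "\<dots> = (\<Sum>i<D. (w i - w (i + 1))^2)" unfolding s1 s2
    by (simp add: sum.distrib[symmetric] power2_eq_square algebra_simps)
  finally show ?thesis .
qed

lemma lin_aux: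
  fixes X S T A B :: real
  assumes "X \<le> 5 / 2 * A + 5 / 3 * B" "S \<le> 5 / 3 * A + 9 / 2 * T" "0 \<le> A"
  shows "S + X \<le> 5 / 3 * B + 9 / 2 * (T + A)"
  using assms by (simp add: field_simps)

lemma chain_left:
  fixes w :: "nat \<Rightarrow> real"
  shows "(\<Sum>i<m. (w i - w (i + 1))^2) \<le> 5/3 * (w m)^2 + 9/2 * (\<Sum>i<m. (w i)^2)"
proof (induction m)
  case 0 then show ?case by simp
next
  case (Suc m)
  have e1: "(\<Sum>i<Suc m. (w i - w (i + 1))^2) = (\<Sum>i<m. (w i - w (i + 1))^2) + (w m - w (Suc m))^2" by simp
  have e2: "(\<Sum>i<Suc m. (w i)^2) = (\<Sum>i<m. (w i)^2) + (w m)^2" by simp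
  have "(w m - w (Suc m))^2 \<le> 5/2 * (w m)^2 + 5/3 * (w (Suc m))^2"
    by (rule sq_bound)
  from lin_aux[OF this Suc.IH zero_le_power2[of "w m"]] show ?case unfolding e1 e2 .
qed

lemma chain_right:
  fixes w :: "nat \<Rightarrow> real"
  shows "(\<Sum>i<m. (w i - w (i + 1))^2) \<le> 5/3 * (w 0)^2 + 9/2 * (\<Sum>i<m. (w (i + 1))^2)"
proof (induction m arbitrary: w)
  case 0 then show ?case by simp
next
  case (Suc m)
  have IH: "(\<Sum>i<m. (w (i+1) - w (i + 2))^2) \<le> 5/3 * (w 1)^2 + 9/2 * (\<Sum>i<m. (w (i + 2))^2)"
    using Suc[of "\<lambda>i. w (i+1)"] by (simp add: add.assoc)
  have e1: "(\<Sum>i<Suc m. (w i - w (i + 1))^2) = (\<Sum>i<m. (w (i+1) - w (i + 2))^2) + (w 0 - w 1)^2"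
    unfolding sum.lessThan_Suc_shift by (simp add: add.assoc)
  have e2: "(\<Sum>i<Suc m. (w (i + 1))^2) = (\<Sum>i<m. (w (i + 2))^2) + (w 1)^2"
    unfolding sum.lessThan_Suc_shift by (simp add: add.assoc)
  have "(w 0 - w 1)^2 \<le> 5/2 * (w 1)^2 + 5/3 * (w 0)^2"
    using sq_bound[of "w 1" "w 0"] by (simp add: power2_commute)
  from lin_aux[OF this IH zero_le_power2[of "w 1"]] show ?case unfolding e1 e2 .
qed

lemma sum_split_add:
  fixes g :: "nat \<Rightarrow> 'a :: comm_monoid_add"
  shows "(\<Sum>i<x + y. g i) = (\<Sum>i<x. g i) + (\<Sum>i<y. g (x + i))"
  by (induction y) (simp_all add: add.assoc)

lemma final_arith:
  fixes a b p1 p2 q1 q2 SA SB SA2 SB2 L R LI RI :: real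
  assumes a1: "a \<ge> 1" and b1: "b \<ge> 1" and nn: "SA2 \<ge> 0" "SB2 \<ge> 0" "LI \<ge> 0" "RI \<ge> 0"
   and Lb: "L \<le> 5/3 * p1^2 + 9/2 * LI" and Rb: "R \<le> 5/3 * q2^2 + 9/2 * RI"
  shows "L + (p1 - p2)^2 + p2^2 + q1^2 + (q1 - q2)^2 + R
     + ((a+3) * SA2 - SA * SA - (p1+p2) * SA) + ((b+3) * SB2 - SB * SB - (q1+q2) * SB)
     + (p1 * (a * p1 - SA) + p2 * (a * p2 - SA)) + (q1 * (b * q1 - SB) + q2 * (b * q2 - SB))
     \<le> (a + b + 3 - 1/3) * (LI + p1^2 + p2^2 + q1^2 + q2^2 + RI + SA2 + SB2)"
proof -
  let ?LHS = "L + (p1 - p2)^2 + p2^2 + q1^2 + (q1 - q2)^2 + R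
     + ((a+3) * SA2 - SA * SA - (p1+p2) * SA) + ((b+3) * SB2 - SB * SB - (q1+q2) * SB)
     + (p1 * (a * p1 - SA) + p2 * (a * p2 - SA)) + (q1 * (b * q1 - SB) + q2 * (b * q2 - SB))"
  let ?RHS = "(a + b + 3 - 1/3) * (LI + p1^2 + p2^2 + q1^2 + q2^2 + RI + SA2 + SB2)"
  have id: "?RHS - ?LHS = ((5/3 * p1^2 + 9/2 * LI - L) + (5/3 * q2^2 + 9/2 * RI - R))
     + (a + b + 8/3 - 9/2) * (LI + RI) + (b - 1/3) * SA2 + (a - 1/3) * SB2
     + (SA + p1 + p2)^2 + (SB + q1 + q2)^2 + (b - 1) * p1^2 + (b - 1/3) * p2^2
     + (a - 1/3) * q1^2 + (a - 1) * q2^2"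
    by (simp add: power2_eq_square field_simps)
  have "0 \<le> (a + b + 8/3 - 9/2) * (LI + RI)" using a1 b1 nn by simp
  moreover have "0 \<le> (b - 1/3) * SA2" "0 \<le> (a - 1/3) * SB2" using a1 b1 nn by simp_all
  moreover have "0 \<le> (b - 1) * p1^2" "0 \<le> (b - 1/3) * p2^2" "0 \<le> (a - 1/3) * q1^2" "0 \<le> (a - 1) * q2^2"
    using a1 b1 by simp_all
  moreover have "0 \<le> (SA + p1 + p2)^2" "0 \<le> (SB + q1 + q2)^2" by simp_all
  moreover have "0 \<le> 5/3 * p1^2 + 9/2 * LI - L" "0 \<le> 5/3 * q2^2 + 9/2 * RI - R" using Lb Rb by simp_all
  ultimately have "0 \<le> ?RHS - ?LHS" unfolding id by (smt (verit))
  then show ?thesis by simp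
qed
context
  fixes n d t a b :: nat
  assumes t3: "3 \<le> t" and td: "t + 2 \<le> d" and a0: "0 < a" and b0: "0 < b" and nn: "n = d + a + b + 1"
begin

lemma NA: assumes i: "d + 1 \<le> i" "i \<le> d + a"
  shows "{j. j < n \<and> H_adj d t a b i j} = ({d+1..d+a} - {i}) \<union> {t-3, t-2, t-1}"
  using i t3 td nn unfolding H_adj_def Let_def by auto

lemma NB: assumes i: "d + a + 1 \<le> i" "i \<le> d + a + b"
  shows "{j. j < n \<and> H_adj d t a b i j} = ({d+a+1..d+a+b} - {i}) \<union> {t-1, t, t+1}"
  using i t3 td nn unfolding H_adj_def Let_def by auto

lemma NP: assumes i: "i \<le> d"
  shows "{j. j < n \<and> H_adj d t a b i j} = {j. j \<le> d \<and> (i = j + 1 \<or> j = i + 1)}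
     \<union> (if i \<in> {t-3, t-2, t-1} then {d+1..d+a} else {}) \<union> (if i \<in> {t-1, t, t+1} then {d+a+1..d+a+b} else {})"
  using i t3 td nn unfolding H_adj_def Let_def by auto

lemma H_sym: "H_adj d t a b i j = H_adj d t a b j i"
  unfolding H_adj_def Let_def by auto


lemma H_irr: "\<not> H_adj d t a b i i"
  unfolding H_adj_def by simp

lemma sum_pair_eq:
  fixes g :: "nat \<Rightarrow> real"
  shows "(\<Sum>i<4. g (k + i)) = g k + g (k+1) + g (k+2) + g (k+3)"
  by (simp add: numeral_eq_Suc add.assoc)

lemma quad_bound:
  assumes v: "v \<in> carrier_vec n" and vc: "v $ (t - 1) = 0"
  shows "v \<bullet> (laplacian n (H_adj d t a b) *\<^sub>v v) \<le> (real a + real b + 3 - 1/3) * (v \<bullet> v)"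
proof -
  define u where "u i = v $ i" for i
  define A where "A = {d+1..d+a}"
  define B where "B = {d+a+1..d+a+b}"
  define nA where "nA = {t-3, t-2, t-1}"
  define nB where "nB = {t-1, t, t+1}"
  define SA where "SA = (\<Sum>k\<in>A. u k)"
  define SB where "SB = (\<Sum>k\<in>B. u k)"
  define SA2 where "SA2 = (\<Sum>k\<in>A. (u k)^2)"
  define SB2 where "SB2 = (\<Sum>k\<in>B. (u k)^2)"
  define p1 where "p1 = u (t-3)"
  define p2 where "p2 = u (t-2)"
  define q1 where "q1 = u t"
  define q2 where "q2 = u (t+1)"
  define r where "r i = (\<Sum>j\<in>{j. j < n \<and> H_adj d t a b i j}. u i - u j)" for i
  have uc: "u (t-1) = 0" using vc u_def by simp
  have cardA: "card A = a" and cardB: "card B = b" unfolding A_def B_def by auto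
  have finA: "finite A" and finB: "finite B" unfolding A_def B_def by auto
  have dec: "{..<n} = {..d} \<union> A \<union> B" unfolding A_def B_def nn by auto
  have disj: "{..d} \<inter> A = {}" "({..d} \<union> A) \<inter> B = {}" unfolding A_def B_def by auto
  have T: "v \<bullet> (laplacian n (H_adj d t a b) *\<^sub>v v) = (\<Sum>i<n. u i * r i)"
    unfolding laplacian_quad[OF H_irr v] u_def r_def ..
  also have "\<dots> = (\<Sum>i\<le>d. u i * r i) + (\<Sum>i\<in>A. u i * r i) + (\<Sum>i\<in>B. u i * r i)"
    unfolding dec using disj finA finB by (simp add: sum.union_disjoint)
  finally have T1: "v \<bullet> (laplacian n (H_adj d t a b) *\<^sub>v v) = (\<Sum>i\<le>d. u i * r i) + (\<Sum>i\<in>A. u i * r i) + (\<Sum>i\<in>B. u i * r i)" .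
  have vv: "v \<bullet> v = (\<Sum>i\<le>d. (u i)^2) + SA2 + SB2"
  proof -
    have "v \<bullet> v = (\<Sum>i<n. (u i)^2)" using v unfolding scalar_prod_def u_def
      by (simp add: lessThan_atLeast0 power2_eq_square)
    also have "\<dots> = (\<Sum>i\<le>d. (u i)^2) + SA2 + SB2"
      unfolding dec SA2_def SB2_def using disj finA finB by (simp add: sum.union_disjoint)
    finally show ?thesis .
  qed
  have nAd: "nA \<inter> A = {}" "nA \<subseteq> {..d}" unfolding nA_def A_def using td by auto
  have nBd: "nB \<inter> B = {}" "nB \<subseteq> {..d}" unfolding nB_def B_def using td by auto
  have sum_nA: "(\<Sum>j\<in>nA. g j) = g (t-3) + g (t-2) + g (t-1)" for g :: "nat \<Rightarrow> real"
  proof -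
    have h: "t - 3 \<noteq> t - 2" "t - 3 \<noteq> t - 1" "t - 2 \<noteq> t - 1" using t3 by auto
    show ?thesis unfolding nA_def using h by simp
  qed
  have sum_nB: "(\<Sum>j\<in>nB. g j) = g (t-1) + g t + g (t+1)" for g :: "nat \<Rightarrow> real"
  proof -
    have h: "t - 1 \<noteq> t" "t - 1 \<noteq> t + 1" "t \<noteq> t + 1" using t3 by auto
    show ?thesis unfolding nB_def using h by simp
  qed
  have rA: "r i = (real a + 3) * u i - SA - p1 - p2" if i: "i \<in> A" for i
  proof -
    have "r i = (\<Sum>j\<in>(A - {i}) \<union> nA. u i - u j)"
      unfolding r_def using i NA[of i] unfolding A_def nA_def by simp
    also have "\<dots> = (\<Sum>j\<in>A - {i}. u i - u j) + (\<Sum>j\<in>nA. u i - u j)"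
      using nAd finA by (intro sum.union_disjoint) (auto simp: nA_def)
    also have "(\<Sum>j\<in>A - {i}. u i - u j) = (\<Sum>j\<in>A. u i - u j)"
      using i finA by (simp add: sum_diff1)
    also have "\<dots> = real a * u i - SA" unfolding SA_def using cardA by (simp add: sum_subtractf)
    also have "(\<Sum>j\<in>nA. u i - u j) = 3 * u i - p1 - p2" unfolding sum_nA p1_def p2_def using uc by simp
    finally show ?thesis by (simp add: algebra_simps)
  qed
  have rB: "r i = (real b + 3) * u i - SB - q1 - q2" if i: "i \<in> B" for i
  proof -
    have "r i = (\<Sum>j\<in>(B - {i}) \<union> nB. u i - u j)"
      unfolding r_def using i NB[of i] unfolding B_def nB_def by simp
    also have "\<dots> = (\<Sum>j\<in>B - {i}. u i - u j) + (\<Sum>j\<in>nB. u i - u j)"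
      using nBd finB by (intro sum.union_disjoint) (auto simp: nB_def)
    also have "(\<Sum>j\<in>B - {i}. u i - u j) = (\<Sum>j\<in>B. u i - u j)"
      using i finB by (simp add: sum_diff1)
    also have "\<dots> = real b * u i - SB" unfolding SB_def using cardB by (simp add: sum_subtractf)
    also have "(\<Sum>j\<in>nB. u i - u j) = 3 * u i - q1 - q2" unfolding sum_nB q1_def q2_def using uc by simp
    finally show ?thesis by (simp add: algebra_simps)
  qed
  have TA: "(\<Sum>i\<in>A. u i * r i) = (real a + 3) * SA2 - SA * SA - (p1 + p2) * SA"
  proof -
    have "(\<Sum>i\<in>A. u i * r i) = (\<Sum>i\<in>A. (real a + 3) * (u i)^2 - (SA + p1 + p2) * u i)"
      by (intro sum.cong refl) (simp add: rA power2_eq_square algebra_simps)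
    also have "\<dots> = (real a + 3) * SA2 - (SA + p1 + p2) * SA"
      unfolding SA2_def SA_def by (simp add: sum_subtractf sum_distrib_left)
    finally show ?thesis by (simp add: algebra_simps)
  qed
  have TB: "(\<Sum>i\<in>B. u i * r i) = (real b + 3) * SB2 - SB * SB - (q1 + q2) * SB"
  proof -
    have "(\<Sum>i\<in>B. u i * r i) = (\<Sum>i\<in>B. (real b + 3) * (u i)^2 - (SB + q1 + q2) * u i)"
      by (intro sum.cong refl) (simp add: rB power2_eq_square algebra_simps)
    also have "\<dots> = (real b + 3) * SB2 - (SB + q1 + q2) * SB"
      unfolding SB2_def SB_def by (simp add: sum_subtractf sum_distrib_left)
    finally show ?thesis by (simp add: algebra_simps)
  qed
  have rP: "r i = ((if 0 < i then u i - u (i - 1) else 0) + (if i < d then u i - u (i + 1) else 0))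
      + (if i \<in> nA then real a * u i - SA else 0) + (if i \<in> nB then real b * u i - SB else 0)" if i: "i \<le> d" for i
  proof -
    have PN: "{j. j \<le> d \<and> (i = j + 1 \<or> j = i + 1)} = (if 0 < i then {i - 1} else {}) \<union> (if i < d then {i + 1} else {})"
      using i by auto
    have sPN: "(\<Sum>j\<in>{j. j \<le> d \<and> (i = j + 1 \<or> j = i + 1)}. u i - u j)
        = (if 0 < i then u i - u (i - 1) else 0) + (if i < d then u i - u (i + 1) else 0)"
      unfolding PN by (cases "0 < i"; cases "i < d") auto
    have sA: "(\<Sum>j\<in>(if i \<in> nA then A else {}). u i - u j) = (if i \<in> nA then real a * u i - SA else 0)"
      unfolding SA_def using cardA by (simp add: sum_subtractf)
    have sB: "(\<Sum>j\<in>(if i \<in> nB then B else {}). u i - u j) = (if i \<in> nB then real b * u i - SB else 0)"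
      unfolding SB_def using cardB by (simp add: sum_subtractf)
    have d1: "{j. j \<le> d \<and> (i = j + 1 \<or> j = i + 1)} \<inter> (if i \<in> nA then A else {}) = {}"
      unfolding A_def by auto
    have d2: "({j. j \<le> d \<and> (i = j + 1 \<or> j = i + 1)} \<union> (if i \<in> nA then A else {})) \<inter> (if i \<in> nB then B else {}) = {}"
      unfolding A_def B_def by auto
    have "r i = (\<Sum>j\<in>{j. j \<le> d \<and> (i = j + 1 \<or> j = i + 1)} \<union> (if i \<in> nA then A else {}) \<union> (if i \<in> nB then B else {}). u i - u j)"
      unfolding r_def NP[OF i] A_def B_def nA_def nB_def ..
    also have "\<dots> = (\<Sum>j\<in>{j. j \<le> d \<and> (i = j + 1 \<or> j = i + 1)}. u i - u j) + (\<Sum>j\<in>(if i \<in> nA then A else {}). u i - u j)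
        + (\<Sum>j\<in>(if i \<in> nB then B else {}). u i - u j)"
      using d1 d2 finA finB by (simp add: sum.union_disjoint)
    finally show ?thesis unfolding sPN sA sB .
  qed
  have TP: "(\<Sum>i\<le>d. u i * r i) = (\<Sum>i<d. (u i - u (i + 1))^2)
      + (p1 * (real a * p1 - SA) + p2 * (real a * p2 - SA)) + (q1 * (real b * q1 - SB) + q2 * (real b * q2 - SB))"
  proof -
    have "(\<Sum>i\<le>d. u i * r i) = (\<Sum>i\<le>d. u i * ((if 0 < i then u i - u (i - 1) else 0) + (if i < d then u i - u (i + 1) else 0)))
       + (\<Sum>i\<le>d. if i \<in> nA then u i * (real a * u i - SA) else 0) + (\<Sum>i\<le>d. if i \<in> nB then u i * (real b * u i - SB) else 0)"
    proof -
      have "(\<Sum>i\<le>d. u i * r i) = (\<Sum>i\<le>d. u i * ((if 0 < i then u i - u (i - 1) else 0) + (if i < d then u i - u (i + 1) else 0))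
        + (if i \<in> nA then u i * (real a * u i - SA) else 0) + (if i \<in> nB then u i * (real b * u i - SB) else 0))"
      proof (intro sum.cong refl)
        fix i assume "i \<in> {..d}"
        then have ri: "r i = ((if 0 < i then u i - u (i - 1) else 0) + (if i < d then u i - u (i + 1) else 0))
          + (if i \<in> nA then real a * u i - SA else 0) + (if i \<in> nB then real b * u i - SB else 0)"
          by (intro rP) simp
        show "u i * r i = u i * ((if 0 < i then u i - u (i - 1) else 0) + (if i < d then u i - u (i + 1) else 0))
          + (if i \<in> nA then u i * (real a * u i - SA) else 0) + (if i \<in> nB then u i * (real b * u i - SB) else 0)"
          unfolding ri by (cases "i \<in> nA"; cases "i \<in> nB") (simp_all only: if_True if_False distrib_left mult_zero_right add_0_right)
      qed
      then show ?thesis by (simp only: sum.distrib)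
    qed
    also have "(\<Sum>i\<le>d. u i * ((if 0 < i then u i - u (i - 1) else 0) + (if i < d then u i - u (i + 1) else 0)))
      = (\<Sum>i<d. (u i - u (i + 1))^2)" by (rule path_sum)
    also have "(\<Sum>i\<le>d. if i \<in> nA then u i * (real a * u i - SA) else 0) = (\<Sum>i\<in>nA. u i * (real a * u i - SA))"
      using nAd by (simp add: sum.inter_restrict[symmetric] Int_absorb1 Int_absorb2)
    also have "\<dots> = p1 * (real a * p1 - SA) + p2 * (real a * p2 - SA)"
      unfolding sum_nA p1_def p2_def using uc by simp
    also have "(\<Sum>i\<le>d. if i \<in> nB then u i * (real b * u i - SB) else 0) = (\<Sum>i\<in>nB. u i * (real b * u i - SB))"
      using nBd by (simp add: sum.inter_restrict[symmetric] Int_absorb1 Int_absorb2)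
    also have "\<dots> = q1 * (real b * q1 - SB) + q2 * (real b * q2 - SB)"
      unfolding sum_nB q1_def q2_def using uc by simp
    finally show ?thesis .
  qed
  define c0 where "c0 = t - 3"
  define m where "m = d - t - 1"
  have dd: "d = (c0 + 4) + m" unfolding c0_def m_def using t3 td by simp
  have dd1: "d + 1 = (c0 + 5) + m" unfolding c0_def m_def using t3 td by simp
  have cs: "c0 = t - 3" "c0 + 1 = t - 2" "c0 + 2 = t - 1" "c0 + 3 = t" "c0 + 4 = t + 1"
    unfolding c0_def using t3 by auto
  define LI where "LI = (\<Sum>i<c0. (u i)^2)"
  define RI where "RI = (\<Sum>i<m. (u (c0 + 4 + (i + 1)))^2)"
  define Lc where "Lc = (\<Sum>i<c0. (u i - u (i + 1))^2)"
  define Rc where "Rc = (\<Sum>i<m. (u (c0 + 4 + i) - u (c0 + 4 + (i + 1)))^2)"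
  have PS: "(\<Sum>i<d. (u i - u (i + 1))^2) = Lc + (p1 - p2)^2 + p2^2 + q1^2 + (q1 - q2)^2 + Rc"
  proof -
    have "(\<Sum>i<d. (u i - u (i + 1))^2) = (\<Sum>i<c0. (u i - u (i + 1))^2) + (\<Sum>i<4. (u (c0 + i) - u (c0 + i + 1))^2)
       + (\<Sum>i<m. (u (c0 + 4 + i) - u (c0 + 4 + i + 1))^2)"
      unfolding dd sum_split_add by simp
    also have "(\<Sum>i<4. (u (c0 + i) - u (c0 + i + 1))^2) = (p1 - p2)^2 + p2^2 + q1^2 + (q1 - q2)^2"
      using sum_pair_eq[of "\<lambda>j. (u j - u (j + 1))^2" c0] cs uc unfolding p1_def p2_def q1_def q2_def
      by (simp add: add.assoc)
    finally show ?thesis unfolding Lc_def Rc_def by (simp add: add.assoc)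
  qed
  have PV: "(\<Sum>i\<le>d. (u i)^2) = LI + p1^2 + p2^2 + q1^2 + q2^2 + RI"
  proof -
    have "(\<Sum>i\<le>d. (u i)^2) = (\<Sum>i<d+1. (u i)^2)" by (simp add: lessThan_Suc_atMost)
    also have "\<dots> = (\<Sum>i<c0. (u i)^2) + (\<Sum>i<5. (u (c0 + i))^2) + (\<Sum>i<m. (u (c0 + 5 + i))^2)"
      unfolding dd1 sum_split_add by simp
    also have "(\<Sum>i<5. (u (c0 + i))^2) = p1^2 + p2^2 + q1^2 + q2^2"
      using cs uc unfolding p1_def p2_def q1_def q2_def by (simp add: numeral_eq_Suc add.assoc)
    finally show ?thesis unfolding LI_def RI_def by (simp add: ac_simps)
  qed
  have Lb: "Lc \<le> 5/3 * p1^2 + 9/2 * LI"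
    using chain_left[of u c0] unfolding Lc_def LI_def p1_def cs .
  have Rb: "Rc \<le> 5/3 * q2^2 + 9/2 * RI"
    using chain_right[of "\<lambda>i. u (c0 + 4 + i)" m] unfolding Rc_def RI_def q2_def cs(5)[symmetric] by simp
  have nn: "SA2 \<ge> 0" "SB2 \<ge> 0" "LI \<ge> 0" "RI \<ge> 0"
    unfolding SA2_def SB2_def LI_def RI_def by (auto intro: sum_nonneg)
  have a1: "real a \<ge> 1" and b1: "real b \<ge> 1" using a0 b0 by auto
  have F: "Lc + (p1 - p2)^2 + p2^2 + q1^2 + (q1 - q2)^2 + Rc
     + ((real a+3) * SA2 - SA * SA - (p1+p2) * SA) + ((real b+3) * SB2 - SB * SB - (q1+q2) * SB)
     + (p1 * (real a * p1 - SA) + p2 * (real a * p2 - SA)) + (q1 * (real b * q1 - SB) + q2 * (real b * q2 - SB))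
     \<le> (real a + real b + 3 - 1/3) * (LI + p1^2 + p2^2 + q1^2 + q2^2 + RI + SA2 + SB2)"
    by (rule final_arith[OF a1 b1 nn Lb Rb])
  show ?thesis unfolding T1 TA TB TP PS vv PV
    using F by (smt (verit))
qed

end

theorem lemma4p1:
  fixes n d t a b :: nat
  assumes "3 \<le> t" "t + 2 \<le> d" "d + 3 \<le> n"
    and "0 < a" "0 < b" "a + b = n - d - 1"
  shows "mu (laplacian n (H_adj d t a b)) (n - d) < real (n - d + 2)"
proof -
  have nn: "n = d + a + b + 1" using assms by simp
  let ?L = "laplacian n (H_adj d t a b)"
  have L: "?L \<in> carrier_mat n n" by (rule laplacian_carrier)
  have sym: "?L $$ (i,j) = ?L $$ (j,i)" if "i < n" "j < n" for i j
    using that H_sym[OF assms(1,2,4,5) nn, of i j] by (simp add: laplacian_index)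
  have c: "t - 1 < n" using assms by simp
  have x: "real (n - d + 2) = real a + real b + 3" using nn by simp
  have H: "v \<bullet> (?L *\<^sub>v v) < real (n - d + 2) * (v \<bullet> v)"
    if v: "v \<in> carrier_vec n" "v \<noteq> 0\<^sub>v n" "v $ (t - 1) = 0" for v
  proof -
    have "v \<bullet> (?L *\<^sub>v v) \<le> (real a + real b + 3 - 1/3) * (v \<bullet> v)"
      by (rule quad_bound[OF assms(1,2,4,5) nn v(1,3)])
    moreover have "v \<bullet> v > 0" by (rule self_pos[OF v(1,2)])
    ultimately show ?thesis unfolding x by (simp add: algebra_simps)
  qed
  have k: "1 \<le> n - d - 1" "n - d - 1 < n" using assms by auto
  have "eigs_desc ?L ! (n - d - 1) < real (n - d + 2)"
    by (rule spectral_count[OF L sym c H k]) auto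
  moreover have "mu ?L (n - d) = eigs_desc ?L ! (n - d - 1)" unfolding mu_def by simp
  ultimately show ?thesis by simp
qed

end
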